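(* Let $V$ be a finite dimensional vector space over a field $\mathbb{K}$ of characteristic zero, and let $u,v_0,\ldots,v_n\in\widehat L(V)$ satisfy $|\exp(u)|\in\big|\sum_{j=0}^n\mathbb{K}[[v_j]]\big|$. Then $|u^m|\in\sum_{j=0}^n\mathbb{K}|v_j^m|$ for all $m\ge0$.
   Context: $\widehat T(V)=\prod_{m\ge0}V^{\otimes m}$ is the completed tensor algebra and $\widehat L(V)$ the completed free Lie algebra on $V$ (primitive elements of $\widehat T(V)$; they have no constant term). For $v\in\widehat L(V)$, $\mathbb{K}[[v]]\subset\widehat T(V)$ is the set of convergent series $\sum_{k\ge0}c_kv^k$, $c_k\in\mathbb{K}$. $|\widehat T(V)|$ is the quotient of $\widehat T(V)$ by the closure of the span of commutators, with projection $x\mapsto|x|$, and $|S|$ denotes the image of a subset $S$. *)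

theory Defs
  imports Main
begin

text \<open>V is a finite-dimensional K-vector space with basis indexed by the finite type 'a.
  Then V^{\<otimes>m} has basis the words of length m over 'a, and an element of the completed
  tensor algebra T^(V) = prod_m V^{\<otimes>m} is a function from words to coefficients.\<close>

type_synonym ('a, 'k) tser = "'a list \<Rightarrow> 'k"

definition tzero :: "('a, 'k::field) tser" where
  "tzero = (\<lambda>_. 0)"

definition tone :: "('a, 'k::field) tser" where
  "tone = (\<lambda>w. if w = [] then 1 else 0)"

definition tmul :: "('a, 'k::field) tser \<Rightarrow> ('a, 'k) tser \<Rightarrow> ('a, 'k) tser" where
  "tmul f g = (\<lambda>w. \<Sum>i\<le>length w. f (take i w) * g (drop i w))"

primrec tpow :: "('a, 'k::field) tser \<Rightarrow> nat \<Rightarrow> ('a, 'k) tser" where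
  "tpow f 0 = tone"
| "tpow f (Suc k) = tmul f (tpow f k)"

text \<open>The convergent series sum_k c_k v^k for v without constant term: the coefficient of a
  word w only receives contributions from k \<le> length w.\<close>
definition fseries :: "(nat \<Rightarrow> 'k::field) \<Rightarrow> ('a, 'k) tser \<Rightarrow> ('a, 'k) tser" where
  "fseries c v = (\<lambda>w. \<Sum>k\<le>length w. c k * tpow v k w)"

definition pseries_set :: "('a, 'k::field) tser \<Rightarrow> ('a, 'k) tser set" where
  "pseries_set v = range (\<lambda>c. fseries c v)"

definition texp :: "('a, 'k::field) tser \<Rightarrow> ('a, 'k) tser" where
  "texp u = fseries (\<lambda>k. 1 / of_nat (fact k)) u"

text \<open>Shuffles with multiplicity; the coproduct of T^(V) (with V primitive) has
  coefficient of x \<otimes> y in \<Delta>f equal to the sum of f over all shuffles of x and y.\<close>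
fun shuffle :: "'a list \<Rightarrow> 'a list \<Rightarrow> 'a list list" where
  "shuffle [] ys = [ys]"
| "shuffle xs [] = [xs]"
| "shuffle (x # xs) (y # ys) =
     map ((#) x) (shuffle xs (y # ys)) @ map ((#) y) (shuffle (x # xs) ys)"

text \<open>Primitive elements: \<Delta> f = f \<otimes> 1 + 1 \<otimes> f, written coefficientwise.\<close>
definition primitive :: "('a, 'k::field) tser \<Rightarrow> bool" where
  "primitive f \<longleftrightarrow>
     (\<forall>x y. sum_list (map f (shuffle x y)) =
        (if y = [] then f x else 0) + (if x = [] then f y else 0))"

definition free_lie :: "('a, 'k::field) tser set" where
  "free_lie = {f. primitive f}"

text \<open>Span of commutators ab - ba (closed under scalars since c(ab-ba) = (ca)b - b(ca)).\<close>
inductive_set comm_span :: "('a, 'k::field) tser set" where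
  zero: "tzero \<in> comm_span"
| step: "x \<in> comm_span \<Longrightarrow> (\<lambda>w. x w + tmul a b w - tmul b a w) \<in> comm_span"

text \<open>Closure in the inverse-limit (degree-filtration) topology of T^(V).\<close>
definition comm_closure :: "('a, 'k::field) tser set" where
  "comm_closure = {f. \<forall>N. \<exists>g\<in>comm_span. \<forall>w. length w < N \<longrightarrow> f w = g w}"

text \<open>|x| \<in> |S| in |T^(V)| = T^(V) / closure of commutator span.\<close>
definition trace_in :: "('a, 'k::field) tser \<Rightarrow> ('a, 'k) tser set \<Rightarrow> bool" where
  "trace_in x S \<longleftrightarrow> (\<exists>s\<in>S. (\<lambda>w. x w - s w) \<in> comm_closure)"

end

theory Submission
  imports Defs "HOL-Computational_Algebra.Polynomial"
begin

definition Dc :: "('a, 'k::field) tser \<Rightarrow> 'a list \<Rightarrow> 'a list \<Rightarrow> 'k" where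
  "Dc f x y = sum_list (map f (shuffle x y))"

lemma Dc_Nil1[simp]: "Dc f [] y = f y"
  by (simp add: Dc_def)

lemma Dc_Nil2[simp]: "Dc f x [] = f x"
  by (cases x) (simp_all add: Dc_def)

lemma Dc_Cons: "Dc f (a # x) (b # y) = Dc (\<lambda>t. f (a # t)) x (b # y) + Dc (\<lambda>t. f (b # t)) (a # x) y"
  by (simp add: Dc_def o_def)

lemma sum_list_map_sum: "sum_list (map (\<lambda>s. \<Sum>k\<in>K. F k s) l) = (\<Sum>k\<in>K. sum_list (map (F k) l))"
  by (induction l) (simp_all add: sum.distrib)

lemma Dc_sum: "Dc (\<lambda>s. \<Sum>k\<in>K. F k s) x y = (\<Sum>k\<in>K. Dc (F k) x y)"
  by (simp add: Dc_def sum_list_map_sum)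

lemma Dc_add: "Dc (\<lambda>s. f s + g s) x y = Dc f x y + Dc g x y"
  by (simp add: Dc_def sum_list_addf)

lemma Dc_diff: "Dc (\<lambda>s. f s - g s) x y = Dc f x y - Dc g x y"
  by (simp add: Dc_def sum_list_subtractf)

lemma Dc_scale: "Dc (\<lambda>s. c * f s) x y = c * Dc f x y"
  by (simp add: Dc_def sum_list_const_mult)

lemma Dc_zero: "Dc (\<lambda>s. 0) x y = 0"
  by (simp add: Dc_def)

lemma shuffle_length: "s \<in> set (shuffle x y) \<Longrightarrow> length s = length x + length y"
  by (induction x y arbitrary: s rule: shuffle.induct) auto

lemma Dc_local: "(\<And>s. length s = length x + length y \<Longrightarrow> f s = g s) \<Longrightarrow> Dc f x y = Dc g x y"
  unfolding Dc_def by (intro arg_cong[where f=sum_list] map_cong refl) (auto dest: shuffle_length)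

lemma tmul_Nil[simp]: "tmul f g [] = f [] * g []"
  by (simp add: tmul_def)

lemma tmul_Cons: "tmul f g (a # w) = f [] * g (a # w) + tmul (\<lambda>t. f (a # t)) g w"
  unfolding tmul_def by (simp add: sum.atMost_Suc_shift del: sum.atMost_Suc)

lemma Dc_tmul:
  "Dc (tmul f g) x y = (\<Sum>i\<le>length x. \<Sum>j\<le>length y. Dc f (take i x) (take j y) * Dc g (drop i x) (drop j y))"
proof (induction x y arbitrary: f g rule: shuffle.induct)
  case (1 ys)
  then show ?case by (simp add: tmul_def)
next
  case (2 x xs)
  then show ?case by (simp add: tmul_def)
next
  case (3 a x b y)
  define fa where "fa = (\<lambda>t. f (a # t))"
  define fb where "fb = (\<lambda>t. f (b # t))"
  have ea: "(\<lambda>t. tmul f g (a # t)) = (\<lambda>t. f [] * g (a # t) + tmul fa g t)"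
    by (simp add: tmul_Cons fa_def)
  have eb: "(\<lambda>t. tmul f g (b # t)) = (\<lambda>t. f [] * g (b # t) + tmul fb g t)"
    by (simp add: tmul_Cons fb_def)
  have "Dc (tmul f g) (a # x) (b # y) = f [] * Dc g (a # x) (b # y) + Dc (tmul fa g) x (b # y) + Dc (tmul fb g) (a # x) y"
    unfolding Dc_Cons[of "tmul f g"] ea eb Dc_add Dc_scale Dc_Cons[of g] by (simp add: algebra_simps)
  also have "Dc (tmul fa g) x (b # y) =
     (\<Sum>i\<le>length x. fa (take i x) * Dc g (drop i x) (b # y)) +
     (\<Sum>i\<le>length x. \<Sum>j\<le>length y. Dc fa (take i x) (b # take j y) * Dc g (drop i x) (drop j y))"
    unfolding "3.IH"(1) by (simp add: sum.atMost_Suc_shift sum.distrib del: sum.atMost_Suc)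
  also have "Dc (tmul fb g) (a # x) y =
     (\<Sum>j\<le>length y. fb (take j y) * Dc g (a # x) (drop j y)) +
     (\<Sum>i\<le>length x. \<Sum>j\<le>length y. Dc fb (a # take i x) (take j y) * Dc g (drop i x) (drop j y))"
    unfolding "3.IH"(2) by (simp add: sum.atMost_Suc_shift del: sum.atMost_Suc)
  also have "(\<Sum>i\<le>length (a # x). \<Sum>j\<le>length (b # y). Dc f (take i (a # x)) (take j (b # y)) * Dc g (drop i (a # x)) (drop j (b # y)))
    = (f [] * Dc g (a # x) (b # y) + (\<Sum>j\<le>length y. fb (take j y) * Dc g (a # x) (drop j y))) +
      ((\<Sum>i\<le>length x. fa (take i x) * Dc g (drop i x) (b # y)) +
       (\<Sum>i\<le>length x. \<Sum>j\<le>length y. (Dc fa (take i x) (b # take j y) + Dc fb (a # take i x) (take j y)) * Dc g (drop i x) (drop j y)))"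
    by (simp add: sum.atMost_Suc_shift Dc_Cons fa_def fb_def sum.distrib del: sum.atMost_Suc)
  ultimately show ?case by (simp add: distrib_right sum.distrib algebra_simps)
qed


lemma tmul_lin1: "tmul (\<lambda>t. c * f t + g t) h w = c * tmul f h w + tmul g h w"
  unfolding tmul_def by (simp add: algebra_simps sum.distrib sum_distrib_left)

lemma tmul_assoc: "tmul (tmul f g) h w = tmul f (tmul g h) w"
proof (induction w arbitrary: f)
  case Nil
  then show ?case by simp
next
  case (Cons a w)
  have e: "(\<lambda>t. tmul f g (a # t)) = (\<lambda>t. f [] * g (a # t) + tmul (\<lambda>s. f (a # s)) g t)"
    by (simp add: tmul_Cons)
  show ?case
    unfolding tmul_Cons[of "tmul f g"] e tmul_lin1 tmul_Cons[of f] Cons.IH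
    by (simp add: tmul_Cons algebra_simps)
qed

lemma tmul_zero1: "tmul (\<lambda>t. 0) g w = 0"
  by (simp add: tmul_def)

lemma if_mult0: "(if P then a else 0) * b = (if P then a * b else (0::'k::semiring_0))"
  by simp

lemma tmul_tone_left: "tmul tone g w = g w"
proof (induction w)
  case (Cons a w)
  have "(\<lambda>t. tone (a # t)) = (\<lambda>t. 0 * tone t + 0 * tone t)" by (simp add: tone_def)
  then show ?case by (simp add: tmul_Cons tmul_lin1) (simp add: tone_def tmul_zero1)
qed (simp add: tone_def)

lemma tmul_tone_right: "tmul g tone w = g w"
proof (induction w arbitrary: g)
  case (Cons a w)
  then show ?case by (simp add: tmul_Cons tone_def)
qed (simp add: tone_def)

lemma tpow_add: "tpow v (a + b) = tmul (tpow v a) (tpow v b)"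
proof (induction a)
  case 0
  then show ?case by (simp add: fun_eq_iff tmul_tone_left)
next
  case (Suc a)
  have "tpow v (Suc a + b) = tmul v (tpow v (a + b))" by simp
  also have "\<dots> = tmul v (tmul (tpow v a) (tpow v b))" by (simp only: Suc.IH)
  finally show ?case by (simp add: fun_eq_iff tmul_assoc)
qed

lemma tpow_small: "v [] = 0 \<Longrightarrow> length w < k \<Longrightarrow> tpow v k w = 0"
proof (induction k arbitrary: w)
  case 0
  then show ?case by simp
next
  case (Suc k)
  have "tpow v (Suc k) w = (\<Sum>i\<le>length w. v (take i w) * tpow v k (drop i w))"
    by (simp add: tmul_def)
  also have "\<dots> = 0"
  proof (intro sum.neutral ballI)
    fix i assume "i \<in> {..length w}"
    show "v (take i w) * tpow v k (drop i w) = 0"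
    proof (cases "i = 0")
      case True then show ?thesis using Suc by simp
    next
      case False
      then have "length (drop i w) < k" using Suc.prems \<open>i \<in> {..length w}\<close> by auto
      then show ?thesis using Suc.prems by (simp add: Suc.IH)
    qed
  qed
  finally show ?case .
qed

lemma prim_Dc: "primitive v \<Longrightarrow> Dc v x y = (if y = [] then v x else 0) + (if x = [] then v y else 0)"
  unfolding primitive_def Dc_def by blast

lemma prim_Nil: "primitive v \<Longrightarrow> v [] = 0"
proof -
  assume "primitive v"
  then have h: "v [] = v [] + v []" using prim_Dc[of v "[]" "[]"] unfolding Dc_Nil1 if_True by simp
  show "v [] = 0" using add_cancel_right_right[THEN iffD1, OF h] .
qed

lemma Dc_tone: "Dc tone x y = tone x * tone y"
proof (cases x)
  case Nil then show ?thesis by (simp add: tone_def)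
next
  case (Cons a x')
  show ?thesis
  proof (cases y)
    case Nil then show ?thesis by (simp add: tone_def)
  next
    case (Cons b y')
    have "(\<lambda>t. tone (a # t)) = (\<lambda>t. 0)" "(\<lambda>t. tone (b # t)) = (\<lambda>t. 0)" by (auto simp: tone_def)
    then show ?thesis using \<open>x = a # x'\<close> Cons by (simp add: Dc_Cons Dc_zero tone_def)
  qed
qed

lemma sum_take_Nil: "(\<Sum>j\<le>length y. if j = 0 \<or> y = [] then h j else 0) = (h 0 :: 'k::comm_monoid_add)"
proof (cases y)
  case Nil then show ?thesis by simp
next
  case (Cons b y')
  then show ?thesis by (simp add: sum.atMost_Suc_shift del: sum.atMost_Suc)
qed

lemma pascal_sum:
  fixes A B :: "nat \<Rightarrow> 'k::comm_ring_1"
  shows "(\<Sum>a\<le>Suc k. of_nat (Suc k choose a) * A a * B (Suc k - a)) =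
    (\<Sum>a\<le>k. of_nat (k choose a) * A (Suc a) * B (k - a)) + (\<Sum>a\<le>k. of_nat (k choose a) * A a * B (Suc k - a))"
proof -
  have z: "k choose Suc k = 0" by (simp add: binomial_eq_0)
  have e: "(\<Sum>a\<le>k. of_nat (k choose a) * A a * B (Suc k - a)) = (\<Sum>a\<le>Suc k. of_nat (k choose a) * A a * B (Suc k - a))"
    by (simp add: z)
  show ?thesis unfolding e
    by (simp add: sum.atMost_Suc_shift algebra_simps sum.distrib del: sum.atMost_Suc)
qed

lemma sum_rearr: "(\<Sum>i\<in>I. f i * (c * g i * q)) = c * (\<Sum>i\<in>I. f i * g i) * (q::'k::comm_ring_1)"
  by (simp add: sum_distrib_left sum_distrib_right algebra_simps)

lemma sum_rearr2: "(\<Sum>i\<in>I. f i * (c * p * g i)) = c * p * (\<Sum>i\<in>I. f i * g i :: 'k::comm_ring_1)"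
  by (simp add: sum_distrib_left sum_distrib_right algebra_simps)

lemma Dc_tpow:
  assumes v: "primitive v"
  shows "Dc (tpow v k) x y = (\<Sum>a\<le>k. of_nat (k choose a) * tpow v a x * tpow v (k - a) y)"
proof (induction k arbitrary: x y)
  case 0
  then show ?case by (simp add: Dc_tone)
next
  case (Suc k)
  let ?D = "\<lambda>p q. Dc (tpow v k) p q"
  have "Dc (tpow v (Suc k)) x y = (\<Sum>i\<le>length x. \<Sum>j\<le>length y. Dc v (take i x) (take j y) * ?D (drop i x) (drop j y))"
    by (simp add: Dc_tmul)
  also have "\<dots> = (\<Sum>i\<le>length x. \<Sum>j\<le>length y. (if j = 0 \<or> y = [] then v (take i x) * ?D (drop i x) (drop j y) else 0))
      + (\<Sum>j\<le>length y. \<Sum>i\<le>length x. (if i = 0 \<or> x = [] then v (take j y) * ?D (drop i x) (drop j y) else 0))"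
    unfolding prim_Dc[OF v] distrib_right sum.distrib
    by (subst (2) sum.swap) (simp add: if_mult0 cong: if_cong)
  also have "\<dots> = (\<Sum>i\<le>length x. v (take i x) * ?D (drop i x) y) + (\<Sum>j\<le>length y. v (take j y) * ?D x (drop j y))"
    by (simp add: sum_take_Nil)
  also have "\<dots> = (\<Sum>a\<le>k. of_nat (k choose a) * tpow v (Suc a) x * tpow v (k - a) y)
      + (\<Sum>a\<le>k. of_nat (k choose a) * tpow v a x * tpow v (Suc (k - a)) y)"
  proof -
    have s1: "(\<Sum>i\<le>length x. v (take i x) * (\<Sum>a\<le>k. of_nat (k choose a) * tpow v a (drop i x) * tpow v (k - a) y))
      = (\<Sum>a\<le>k. of_nat (k choose a) * tpow v (Suc a) x * tpow v (k - a) y)"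
      unfolding sum_distrib_left
      apply (subst sum.swap)
      apply (rule sum.cong[OF refl])
      apply (subst sum_rearr)
      apply (simp add: tmul_def)
      done
    have s2: "(\<Sum>j\<le>length y. v (take j y) * (\<Sum>a\<le>k. of_nat (k choose a) * tpow v a x * tpow v (k - a) (drop j y)))
      = (\<Sum>a\<le>k. of_nat (k choose a) * tpow v a x * tpow v (Suc (k - a)) y)"
      unfolding sum_distrib_left
      apply (subst sum.swap)
      apply (rule sum.cong[OF refl])
      apply (subst sum_rearr2)
      apply (simp add: tmul_def)
      done
    show ?thesis unfolding Suc.IH s1 s2 ..
  qed
  also have "\<dots> = (\<Sum>a\<le>Suc k. of_nat (Suc k choose a) * tpow v a x * tpow v (Suc k - a) y)"
    unfolding pascal_sum[of _ "\<lambda>a. tpow v a x" "\<lambda>a. tpow v a y"]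
    by (intro arg_cong2[where f="(+)"] refl sum.cong) (simp_all add: Suc_diff_le)
  finally show ?case .
qed

definition lad :: "'a \<Rightarrow> ('a, 'k::field) tser \<Rightarrow> ('a, 'k) tser" where
  "lad z f w = (case w of [] \<Rightarrow> 0 | a # t \<Rightarrow> if a = z then f t else 0)"

definition rad :: "'a \<Rightarrow> ('a, 'k::field) tser \<Rightarrow> ('a, 'k) tser" where
  "rad z f w = (if w = [] then 0 else if last w = z then f (butlast w) else 0)"

lemma lad_Nil[simp]: "lad z f [] = 0" by (simp add: lad_def)
lemma lad_Cons[simp]: "lad z f (a # t) = (if a = z then f t else 0)" by (simp add: lad_def)
lemma rad_Nil[simp]: "rad z f [] = 0" by (simp add: rad_def)
lemma rad_snoc[simp]: "rad z f (t @ [a]) = (if a = z then f t else 0)" by (simp add: rad_def)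
lemma rad_Cons: "rad z f (a # t) = (if t = [] then (if a = z then f [] else 0) else rad z (\<lambda>s. f (a # s)) t)"
  by (simp add: rad_def)
lemma rad_zero[simp]: "rad z (\<lambda>s. 0) w = 0" by (simp add: rad_def)
lemma rad_add: "rad z (\<lambda>s. g s + h s) w = rad z g w + rad z h w" by (simp add: rad_def)

lemma Dc_if: "Dc (\<lambda>t. if P then f t else 0) x y = (if P then Dc f x y else 0)"
  by (cases P) (simp_all add: Dc_zero)

lemma Dc_indic_Nil: "Dc (\<lambda>t. if t = [] then c else 0) x y = (if x = [] \<and> y = [] then c else 0)"
  by (cases x; cases y) (simp_all add: Dc_Cons Dc_zero)

lemma Dc_lad: "Dc (lad z f) p q = lad z (\<lambda>p'. Dc f p' q) p + lad z (\<lambda>q'. Dc f p q') q"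
  by (cases p; cases q) (simp_all add: Dc_Cons Dc_if)

lemma Dc_rad: "Dc (rad z f) p q = rad z (\<lambda>p'. Dc f p' q) p + rad z (\<lambda>q'. Dc f p q') q"
proof (induction p q arbitrary: f rule: shuffle.induct)
  case (1 ys)
  then show ?case by simp
next
  case (2 x xs)
  then show ?case by simp
next
  case (3 a p b q)
  have ea: "(\<lambda>t. rad z f (a # t)) = (\<lambda>t. rad z (\<lambda>s. f (a # s)) t + (if t = [] then (if a = z then f [] else 0) else 0))"
    by (auto simp: rad_Cons fun_eq_iff)
  have eb: "(\<lambda>t. rad z f (b # t)) = (\<lambda>t. rad z (\<lambda>s. f (b # s)) t + (if t = [] then (if b = z then f [] else 0) else 0))"
    by (auto simp: rad_Cons fun_eq_iff)
  have "Dc (rad z f) (a # p) (b # q) = Dc (rad z (\<lambda>s. f (a # s))) p (b # q) + Dc (rad z (\<lambda>s. f (b # s))) (a # p) q"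
    unfolding Dc_Cons[of "rad z f"] ea eb Dc_add Dc_indic_Nil by simp
  also have "\<dots> = rad z (\<lambda>p'. Dc f p' (b # q)) (a # p) + rad z (\<lambda>q'. Dc f (a # p) q') (b # q)"
    unfolding "3.IH" by (simp add: rad_Cons Dc_Cons rad_add)
  finally show ?case .
qed

primrec psi :: "nat \<Rightarrow> ('a, 'k::field) tser \<Rightarrow> ('a, 'k) tser" where
  "psi 0 f = (\<lambda>w. if w = [] then f [] else 0)"
| "psi (Suc N) f = (\<lambda>w. \<Sum>i\<le>length w. psi N (\<lambda>s. Dc f s (drop i w)) (take i w))"

lemma psi_local: "(\<And>s. length s = length w \<Longrightarrow> f s = g s) \<Longrightarrow> psi N f w = psi N g w"
proof (induction N arbitrary: f g w)
  case 0
  then show ?case by simp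
next
  case (Suc N)
  show ?case unfolding psi.simps
  proof (intro sum.cong refl Suc.IH Dc_local)
    fix i and s s' :: "'a list" assume "i \<in> {..length w}" "length s = length (take i w)" "length s' = length s + length (drop i w)"
    then show "f s' = g s'" using Suc.prems by auto
  qed
qed

lemma Dc_lin: "Dc (\<lambda>s. a * f s + b * g s) x y = a * Dc f x y + b * Dc g x y"
  by (simp add: Dc_add Dc_scale)

lemma psi_lin: "psi N (\<lambda>s. a * f s + b * g s) w = a * psi N f w + b * psi N g w"
proof (induction N arbitrary: f g w)
  case 0
  then show ?case by simp
next
  case (Suc N)
  show ?case by (simp add: Dc_lin Suc.IH sum.distrib sum_distrib_left)
qed

lemma psi_add: "psi N (\<lambda>s. f s + g s) w = psi N f w + psi N g w"
  using psi_lin[of N 1 f 1 g w] by simp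

lemma psi_diff: "psi N (\<lambda>s. f s - g s) w = psi N f w - psi N g w"
  using psi_lin[of N 1 f "-1" g w] by simp

lemma psi_scale: "psi N (\<lambda>s. c * f s) w = c * psi N f w"
  using psi_lin[of N c f 0 f w] by simp

lemma psi_zero: "psi N (\<lambda>s. 0) w = 0"
  using psi_lin[of N 0 "\<lambda>s. 0" 0 "\<lambda>s. 0" w] by simp

lemma psi_sum: "finite K \<Longrightarrow> psi N (\<lambda>s. \<Sum>k\<in>K. F k s) w = (\<Sum>k\<in>K. psi N (F k) w)"
proof (induction K rule: finite_induct)
  case empty
  then show ?case by (simp add: psi_zero)
next
  case (insert x F)
  then show ?case by (simp add: psi_add)
qed

lemma psi_sum_scale: "finite K \<Longrightarrow> psi N (\<lambda>s. \<Sum>k\<in>K. c k * F k s) w = (\<Sum>k\<in>K. c k * psi N (F k) w)"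
  by (simp add: psi_sum psi_scale)

lemma psi_if: "psi N (\<lambda>s. if P then f s else 0) w = (if P then psi N f w else 0)"
  by (cases P) (simp_all add: psi_zero)

lemma psi_tpow:
  assumes v: "primitive v"
  shows "psi N (tpow v k) w = of_nat N ^ k * tpow v k w"
proof (induction N arbitrary: k w)
  case 0
  show ?case
  proof (cases k)
    case 0
    then show ?thesis by (simp add: tone_def)
  next
    case (Suc k')
    then show ?thesis using tpow_small[of v "[]" k] prim_Nil[OF v] by simp
  qed
next
  case (Suc N)
  have e: "(\<lambda>s. Dc (tpow v k) s q) = (\<lambda>s. \<Sum>a\<le>k. (of_nat (k choose a) * tpow v (k - a) q) * tpow v a s)" for q
    by (simp add: Dc_tpow[OF v] fun_eq_iff ac_simps)
  have "psi (Suc N) (tpow v k) w = (\<Sum>i\<le>length w. \<Sum>a\<le>k. (of_nat (k choose a) * tpow v (k - a) (drop i w)) * (of_nat N ^ a * tpow v a (take i w)))"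
    by (simp add: e psi_sum_scale Suc.IH)
  also have "\<dots> = (\<Sum>a\<le>k. of_nat (k choose a) * of_nat N ^ a * (\<Sum>i\<le>length w. tpow v a (take i w) * tpow v (k - a) (drop i w)))"
    by (subst sum.swap) (simp add: sum_distrib_left ac_simps)
  also have "\<dots> = (\<Sum>a\<le>k. of_nat (k choose a) * of_nat N ^ a * tpow v k w)"
  proof (intro sum.cong refl)
    fix a assume "a \<in> {..k}"
    then have "tpow v k = tmul (tpow v a) (tpow v (k - a))" using tpow_add[of v a "k - a"] by simp
    then show "of_nat (k choose a) * of_nat N ^ a * (\<Sum>i\<le>length w. tpow v a (take i w) * tpow v (k - a) (drop i w))
      = of_nat (k choose a) * of_nat N ^ a * tpow v k w" by (simp add: tmul_def)
  qed
  also have "\<dots> = (of_nat N + 1) ^ k * tpow v k w"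
    by (simp add: binomial_ring sum_distrib_right)
  also have "\<dots> = of_nat (Suc N) ^ k * tpow v k w" by (simp add: add.commute)
  finally show ?case .
qed

definition Mu :: "('a list \<Rightarrow> 'a list \<Rightarrow> 'k::field) \<Rightarrow> ('a, 'k) tser" where
  "Mu F w = (\<Sum>i\<le>length w. F (take i w) (drop i w))"

lemma psi_Suc_Mu: "psi (Suc N) f w = Mu (\<lambda>p q. psi N (\<lambda>s. Dc f s q) p) w"
  by (simp add: Mu_def)

lemma Mu_add: "Mu (\<lambda>p q. F p q + G p q) w = Mu F w + Mu G w"
  by (simp add: Mu_def sum.distrib)

lemma Mu_diff: "Mu (\<lambda>p q. F p q - G p q) w = Mu F w - Mu G w"
  by (simp add: Mu_def sum_subtractf)

lemma T1: "lad z (Mu F) w = Mu (\<lambda>p q. lad z (\<lambda>p'. F p' q) p) w"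
proof (cases w)
  case Nil
  then show ?thesis by (simp add: Mu_def)
next
  case (Cons a t)
  then show ?thesis by (cases "a = z") (simp_all add: Mu_def sum.atMost_Suc_shift del: sum.atMost_Suc)
qed

lemma T2: "rad z (Mu F) w = Mu (\<lambda>p q. rad z (\<lambda>q'. F p q') q) w"
proof (cases w rule: rev_exhaust)
  case Nil
  then show ?thesis by (simp add: Mu_def)
next
  case (snoc t a)
  have "Mu (\<lambda>p q. rad z (\<lambda>q'. F p q') q) w = (\<Sum>i\<le>length t. rad z (\<lambda>q'. F (take i w) q') (drop i w))"
    using snoc by (simp add: Mu_def)
  also have "\<dots> = (\<Sum>i\<le>length t. if a = z then F (take i t) (drop i t) else 0)"
    using snoc by (intro sum.cong refl) auto
  finally show ?thesis using snoc by (simp add: Mu_def)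
qed

lemma T3: "Mu (\<lambda>p q. lad z (\<lambda>q'. F p q') q) w = Mu (\<lambda>p q. rad z (\<lambda>p'. F p' q) p) w"
proof (cases w)
  case Nil
  then show ?thesis by (simp add: Mu_def)
next
  case (Cons b t)
  define m where "m = length t"
  have n: "length w = Suc m" using Cons m_def by simp
  have dm: "drop (Suc m) w = []" using n by simp
  have "Mu (\<lambda>p q. lad z (\<lambda>q'. F p q') q) w = (\<Sum>i\<le>m. lad z (\<lambda>q'. F (take i w) q') (drop i w))"
    unfolding Mu_def n by (simp add: dm)
  also have "\<dots> = (\<Sum>i\<le>m. if w ! i = z then F (take i w) (drop (Suc i) w) else 0)"
  proof (intro sum.cong refl)
    fix i assume "i \<in> {..m}"
    then have "i < length w" using n by simp
    then have "drop i w = w ! i # drop (Suc i) w" by (rule Cons_nth_drop_Suc[symmetric])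
    then show "lad z (\<lambda>q'. F (take i w) q') (drop i w) = (if w ! i = z then F (take i w) (drop (Suc i) w) else 0)"
      by simp
  qed
  also have "\<dots> = (\<Sum>i\<le>m. rad z (\<lambda>p'. F p' (drop (Suc i) w)) (take (Suc i) w))"
  proof (intro sum.cong refl)
    fix i assume "i \<in> {..m}"
    then have "i < length w" using n by simp
    then have "take (Suc i) w = take i w @ [w ! i]" by (rule take_Suc_conv_app_nth)
    then show "(if w ! i = z then F (take i w) (drop (Suc i) w) else 0) = rad z (\<lambda>p'. F p' (drop (Suc i) w)) (take (Suc i) w)"
      by simp
  qed
  also have "\<dots> = Mu (\<lambda>p q. rad z (\<lambda>p'. F p' q) p) w"
    unfolding Mu_def n by (simp add: sum.atMost_Suc_shift del: sum.atMost_Suc)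
  finally show ?thesis .
qed

lemma psi_lad2: "psi N (\<lambda>s. lad z (\<lambda>q'. G s q') q) p = lad z (\<lambda>q'. psi N (\<lambda>s. G s q') p) q"
  by (cases q) (simp_all add: psi_zero psi_if)

lemma psi_rad2: "psi N (\<lambda>s. rad z (\<lambda>q'. G s q') q) p = rad z (\<lambda>q'. psi N (\<lambda>s. G s q') p) q"
  unfolding rad_def by (simp add: psi_zero psi_if)

lemma psi_ad: "psi N (\<lambda>s. lad z f s - rad z f s) w = lad z (psi N f) w - rad z (psi N f) w"
proof (induction N arbitrary: f w)
  case 0
  show ?case
  proof (cases w)
    case Nil
    then show ?thesis by simp
  next
    case (Cons a t)
    then show ?thesis by (cases t) (simp_all add: rad_Cons)
  qed
next
  case (Suc N)
  define F where "F = (\<lambda>p q. psi N (\<lambda>s. Dc f s q) p)"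
  have d: "(\<lambda>s. Dc (\<lambda>s. lad z f s - rad z f s) s q) =
     (\<lambda>s. (lad z (\<lambda>p'. Dc f p' q) s - rad z (\<lambda>p'. Dc f p' q) s) + (lad z (\<lambda>q'. Dc f s q') q - rad z (\<lambda>q'. Dc f s q') q))" for q
    by (simp add: fun_eq_iff Dc_diff Dc_lad Dc_rad)
  have "psi (Suc N) (\<lambda>s. lad z f s - rad z f s) w =
    Mu (\<lambda>p q. (lad z (\<lambda>p'. F p' q) p - rad z (\<lambda>p'. F p' q) p) + (lad z (\<lambda>q'. F p q') q - rad z (\<lambda>q'. F p q') q)) w"
    apply (simp only: psi_Suc_Mu d)
    apply (simp only: psi_add)
    apply (simp only: Suc.IH)
    apply (simp only: psi_diff psi_lad2 psi_rad2 F_def)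
    done
  also have "\<dots> = Mu (\<lambda>p q. lad z (\<lambda>p'. F p' q) p) w - Mu (\<lambda>p q. rad z (\<lambda>q'. F p q') q) w"
    unfolding Mu_add Mu_diff T3 by simp
  also have "\<dots> = lad z (psi (Suc N) f) w - rad z (psi (Suc N) f) w"
    unfolding T1[symmetric] T2[symmetric] F_def psi_Suc_Mu[symmetric, abs_def] by simp
  finally show ?case .
qed

definition delta :: "'a list \<Rightarrow> ('a, 'k::field) tser" where
  "delta p = (\<lambda>w. if w = p then 1 else 0)"

inductive_set adsp :: "('a, 'k::field) tser set" where
  adsp_zero: "(\<lambda>w. 0) \<in> adsp"
| adsp_step: "X \<in> adsp \<Longrightarrow> (\<lambda>w. X w + (lad z f w - rad z f w)) \<in> adsp"

lemma adsp_add: assumes X: "X \<in> adsp" and Y: "Y \<in> adsp" shows "(\<lambda>w. X w + Y w) \<in> adsp"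
  using Y
proof (induction Y rule: adsp.induct)
  case adsp_zero
  then show ?case using X by simp
next
  case (adsp_step Y z f)
  have "(\<lambda>w. (X w + Y w) + (lad z f w - rad z f w)) \<in> adsp"
    using adsp_step.IH by (rule adsp.adsp_step)
  then show ?case by (simp add: add.assoc)
qed

lemma lad_scale: "lad z (\<lambda>t. c * f t) w = c * lad z f w"
  by (cases w) simp_all

lemma rad_scale: "rad z (\<lambda>t. c * f t) w = c * rad z f w"
  by (simp add: rad_def)

lemma adsp_scale: "X \<in> adsp \<Longrightarrow> (\<lambda>w. c * X w) \<in> adsp"
proof (induction X rule: adsp.induct)
  case adsp_zero
  then show ?case by (simp add: adsp.adsp_zero)
next
  case (adsp_step X z f)
  have "(\<lambda>w. c * X w + (lad z (\<lambda>t. c * f t) w - rad z (\<lambda>t. c * f t) w)) \<in> adsp"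
    using adsp_step.IH by (rule adsp.adsp_step)
  then show ?case by (simp add: lad_scale rad_scale algebra_simps)
qed

lemma adsp_sum: "finite K \<Longrightarrow> (\<And>k. k \<in> K \<Longrightarrow> F k \<in> adsp) \<Longrightarrow> (\<lambda>w. \<Sum>k\<in>K. F k w) \<in> adsp"
proof (induction K rule: finite_induct)
  case empty
  then show ?case by (simp add: adsp.adsp_zero)
next
  case (insert x K)
  then show ?case by (simp add: adsp_add)
qed

lemma psi_zero_fun: "psi N (\<lambda>w. 0) = (\<lambda>w. 0)"
  by (simp add: fun_eq_iff psi_zero)

lemma psi_adsp: "X \<in> adsp \<Longrightarrow> psi N X \<in> adsp"
proof (induction X rule: adsp.induct)
  case adsp_zero
  show ?case by (simp add: psi_zero_fun adsp.adsp_zero)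
next
  case (adsp_step X z f)
  have "psi N (\<lambda>w. X w + (lad z f w - rad z f w)) = (\<lambda>w. psi N X w + (lad z (psi N f) w - rad z (psi N f) w))"
    by (simp add: fun_eq_iff psi_add psi_ad)
  then show ?case using adsp.adsp_step[OF adsp_step.IH] by simp
qed

lemma lad_tmul: "tmul (delta [z]) f = lad z f"
proof
  fix w show "tmul (delta [z]) f w = lad z f w"
  proof (cases w)
    case Nil then show ?thesis by (simp add: delta_def)
  next
    case (Cons a t)
    show ?thesis
    proof (cases "a = z")
      case True
      then have e: "(\<lambda>s. delta [z] (a # s)) = tone" by (auto simp: delta_def tone_def fun_eq_iff)
      have "tmul (delta [z]) f (a # t) = delta [z] [] * f (a # t) + tmul (\<lambda>s. delta [z] (a # s)) f t"
        by (rule tmul_Cons)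
      also have "\<dots> = f t" unfolding e tmul_tone_left by (simp add: delta_def)
      finally show ?thesis using Cons True by simp
    next
      case False
      then have e: "(\<lambda>s. delta [z] (a # s)) = (\<lambda>s. 0)" by (auto simp: delta_def fun_eq_iff)
      have "tmul (delta [z]) f (a # t) = delta [z] [] * f (a # t) + tmul (\<lambda>s. delta [z] (a # s)) f t"
        by (rule tmul_Cons)
      also have "\<dots> = 0" unfolding e tmul_zero1 by (simp add: delta_def)
      finally show ?thesis using Cons False by simp
    qed
  qed
qed

lemma rad_tmul_pt: "tmul f (delta [z]) w = rad z f w"
proof (induction w arbitrary: f)
  case Nil
  then show ?case by (simp add: delta_def)
next
  case (Cons a t)
  then show ?case by (cases t) (auto simp: tmul_Cons delta_def rad_Cons)
qed

lemma rad_tmul: "tmul f (delta [z]) = rad z f"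
  by (rule ext) (rule rad_tmul_pt)

lemma adsp_comm: "X \<in> adsp \<Longrightarrow> X \<in> comm_span"
proof (induction X rule: adsp.induct)
  case adsp_zero
  then show ?case using comm_span.zero by (simp add: tzero_def)
next
  case (adsp_step X z f)
  have "(\<lambda>w. X w + tmul (delta [z]) f w - tmul f (delta [z]) w) \<in> comm_span"
    using adsp_step.IH by (rule comm_span.step)
  then show ?case by (simp add: lad_tmul rad_tmul algebra_simps)
qed

lemma delta_Cons: "tmul (delta [z]) (delta p) = delta (z # p)"
  unfolding lad_tmul by (auto simp: fun_eq_iff delta_def lad_def split: list.split)

lemma delta_Nil: "delta [] = tone"
  by (simp add: delta_def tone_def fun_eq_iff)

lemma comm_delta: "(\<lambda>w. tmul (delta p) b w - tmul b (delta p) w) \<in> adsp"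
proof (induction p arbitrary: b)
  case Nil
  then show ?case by (simp add: delta_Nil tmul_tone_left tmul_tone_right adsp.adsp_zero)
next
  case (Cons z p)
  define g where "g = tmul (delta p) b"
  have dz: "delta (z # p) = tmul (delta [z]) (delta p)" by (rule delta_Cons[symmetric])
  have e1: "tmul (delta (z # p)) b w = lad z g w" for w
    unfolding dz tmul_assoc g_def by (subst lad_tmul) (rule refl)
  have e2: "tmul b (delta (z # p)) w = tmul (rad z b) (delta p) w" for w
    unfolding dz tmul_assoc[symmetric] rad_tmul ..
  have e3: "rad z g w = tmul (delta p) (rad z b) w" for w
    unfolding g_def rad_tmul[symmetric] tmul_assoc ..
  have "(\<lambda>w. (tmul (delta p) (rad z b) w - tmul (rad z b) (delta p) w) + (lad z g w - rad z g w)) \<in> adsp"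
    using Cons.IH[of "rad z b"] by (rule adsp.adsp_step)
  then show ?case unfolding e1 e2 e3 by (simp add: algebra_simps)
qed

lemma tmul_sum1: "tmul (\<lambda>t. \<Sum>k\<in>K. c k * F k t) h w = (\<Sum>k\<in>K. c k * tmul (F k) h w)"
proof -
  have "tmul (\<lambda>t. \<Sum>k\<in>K. c k * F k t) h w = (\<Sum>i\<le>length w. \<Sum>k\<in>K. c k * (F k (take i w) * h (drop i w)))"
    unfolding tmul_def by (simp add: sum_distrib_right mult.assoc)
  also have "\<dots> = (\<Sum>k\<in>K. \<Sum>i\<le>length w. c k * (F k (take i w) * h (drop i w)))"
    by (rule sum.swap)
  also have "\<dots> = (\<Sum>k\<in>K. c k * tmul (F k) h w)"
    unfolding tmul_def by (simp add: sum_distrib_left)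
  finally show ?thesis .
qed

lemma tmul_sum2: "tmul h (\<lambda>t. \<Sum>k\<in>K. c k * F k t) w = (\<Sum>k\<in>K. c k * tmul h (F k) w)"
proof -
  have "tmul h (\<lambda>t. \<Sum>k\<in>K. c k * F k t) w = (\<Sum>i\<le>length w. \<Sum>k\<in>K. c k * (h (take i w) * F k (drop i w)))"
    unfolding tmul_def by (simp add: sum_distrib_left mult.left_commute)
  also have "\<dots> = (\<Sum>k\<in>K. \<Sum>i\<le>length w. c k * (h (take i w) * F k (drop i w)))"
    by (rule sum.swap)
  also have "\<dots> = (\<Sum>k\<in>K. c k * tmul h (F k) w)"
    unfolding tmul_def by (simp add: sum_distrib_left)
  finally show ?thesis .
qed

lemma tmul_local1: "(\<And>t. length t \<le> length w \<Longrightarrow> a t = a' t) \<Longrightarrow> tmul a b w = tmul a' b w"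
  unfolding tmul_def by (intro sum.cong refl) simp

lemma tmul_local2: "(\<And>t. length t \<le> length w \<Longrightarrow> a t = a' t) \<Longrightarrow> tmul b a w = tmul b a' w"
  unfolding tmul_def by (intro sum.cong refl) simp

definition cladsp :: "('a, 'k::field) tser set" where
  "cladsp = {f. \<forall>N. \<exists>g\<in>adsp. \<forall>w. length w < N \<longrightarrow> f w = g w}"

lemma comm_in_cl:
  "(\<lambda>w. tmul a b w - tmul b a w) \<in> (cladsp :: ('a::finite, 'k::field) tser set)"
  unfolding cladsp_def
proof (intro CollectI allI)
  fix N0 :: nat
  define P where "P = {p :: 'a list. length p < N0}"
  have fP: "finite P"
    unfolding P_def using finite_lists_length_le[of "UNIV :: 'a set" N0]
    by (rule finite_subset[rotated]) auto
  define a' where "a' = (\<lambda>t. \<Sum>p\<in>P. a p * delta p t)"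
  have a'a: "a' t = a t" if "length t < N0" for t
  proof -
    have "a' t = (\<Sum>p\<in>P. if t = p then a p else 0)"
      unfolding a'_def delta_def by (intro sum.cong refl) simp
    also have "\<dots> = a t" using that fP by (simp add: sum.delta' P_def)
    finally show ?thesis .
  qed
  have "(\<lambda>w. tmul a' b w - tmul b a' w) = (\<lambda>w. \<Sum>p\<in>P. a p * (tmul (delta p) b w - tmul b (delta p) w))"
    unfolding a'_def tmul_sum1 tmul_sum2 by (simp add: fun_eq_iff algebra_simps sum_subtractf)
  also have "\<dots> \<in> adsp"
    using fP by (intro adsp_sum adsp_scale comm_delta)
  finally have G: "(\<lambda>w. tmul a' b w - tmul b a' w) \<in> adsp" .
  show "\<exists>g\<in>adsp. \<forall>w. length w < N0 \<longrightarrow> tmul a b w - tmul b a w = g w"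
  proof (intro bexI[OF _ G] allI impI)
    fix w :: "'a list" assume w: "length w < N0"
    have "tmul a b w = tmul a' b w" by (rule tmul_local1) (use w a'a in auto)
    moreover have "tmul b a w = tmul b a' w" by (rule tmul_local2) (use w a'a in auto)
    ultimately show "tmul a b w - tmul b a w = tmul a' b w - tmul b a' w" by simp
  qed
qed

lemma comm_span_cl: "x \<in> comm_span \<Longrightarrow> x \<in> (cladsp :: ('a::finite, 'k::field) tser set)"
proof (induction x rule: comm_span.induct)
  case zero
  show ?case unfolding cladsp_def tzero_def by (intro CollectI allI bexI[OF _ adsp.adsp_zero]) simp
next
  case (step x a b)
  show ?case unfolding cladsp_def
  proof (intro CollectI allI)
    fix N
    obtain g1 where g1: "g1 \<in> adsp" "\<forall>w. length w < N \<longrightarrow> x w = g1 w"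
      using step.IH unfolding cladsp_def by blast
    obtain g2 where g2: "g2 \<in> adsp" "\<forall>w. length w < N \<longrightarrow> tmul a b w - tmul b a w = g2 w"
      using comm_in_cl[of a b] unfolding cladsp_def by blast
    show "\<exists>g\<in>adsp. \<forall>w. length w < N \<longrightarrow> x w + tmul a b w - tmul b a w = g w"
      by (intro bexI[OF _ adsp_add[OF g1(1) g2(1)]]) (use g1 g2 in \<open>auto simp: algebra_simps\<close>)
  qed
qed

lemma closure_cl: "comm_closure = (cladsp :: ('a::finite, 'k::field) tser set)"
proof
  show "comm_closure \<subseteq> (cladsp :: ('a, 'k) tser set)"
  proof
    fix f :: "('a, 'k) tser" assume "f \<in> comm_closure"
    show "f \<in> cladsp" unfolding cladsp_def
    proof (intro CollectI allI)
      fix N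
      obtain g where g: "g \<in> comm_span" "\<forall>w. length w < N \<longrightarrow> f w = g w"
        using \<open>f \<in> comm_closure\<close> unfolding comm_closure_def by blast
      obtain h where h: "h \<in> adsp" "\<forall>w. length w < N \<longrightarrow> g w = h w"
        using comm_span_cl[OF g(1)] unfolding cladsp_def by blast
      show "\<exists>g\<in>adsp. \<forall>w. length w < N \<longrightarrow> f w = g w"
        using g h by auto
    qed
  qed
  show "cladsp \<subseteq> (comm_closure :: ('a, 'k) tser set)"
    unfolding cladsp_def comm_closure_def using adsp_comm by blast
qed

lemma cl_add: "X \<in> cladsp \<Longrightarrow> Y \<in> cladsp \<Longrightarrow> (\<lambda>w. X w + Y w) \<in> cladsp"
proof -
  assume X: "X \<in> cladsp" and Y: "Y \<in> cladsp"
  show ?thesis unfolding cladsp_def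
  proof (intro CollectI allI)
    fix N
    obtain g1 where g1: "g1 \<in> adsp" "\<forall>w. length w < N \<longrightarrow> X w = g1 w" using X unfolding cladsp_def by blast
    obtain g2 where g2: "g2 \<in> adsp" "\<forall>w. length w < N \<longrightarrow> Y w = g2 w" using Y unfolding cladsp_def by blast
    show "\<exists>g\<in>adsp. \<forall>w. length w < N \<longrightarrow> X w + Y w = g w"
      by (intro bexI[OF _ adsp_add[OF g1(1) g2(1)]]) (use g1 g2 in auto)
  qed
qed

lemma cl_scale: "X \<in> cladsp \<Longrightarrow> (\<lambda>w. c * X w) \<in> cladsp"
proof -
  assume X: "X \<in> cladsp"
  show ?thesis unfolding cladsp_def
  proof (intro CollectI allI)
    fix N
    obtain g1 where g1: "g1 \<in> adsp" "\<forall>w. length w < N \<longrightarrow> X w = g1 w" using X unfolding cladsp_def by blast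
    show "\<exists>g\<in>adsp. \<forall>w. length w < N \<longrightarrow> c * X w = g w"
      by (intro bexI[OF _ adsp_scale[OF g1(1)]]) (use g1 in auto)
  qed
qed

lemma cl_sum: "finite K \<Longrightarrow> (\<And>k. k \<in> K \<Longrightarrow> F k \<in> cladsp) \<Longrightarrow> (\<lambda>w. \<Sum>k\<in>K. F k w) \<in> cladsp"
proof (induction K rule: finite_induct)
  case empty
  show ?case unfolding cladsp_def by (intro CollectI allI bexI[OF _ adsp.adsp_zero]) simp
next
  case (insert x K)
  then show ?case by (simp add: cl_add)
qed

lemma psi_cl: "X \<in> cladsp \<Longrightarrow> psi N X \<in> cladsp"
proof -
  assume X: "X \<in> cladsp"
  show ?thesis unfolding cladsp_def
  proof (intro CollectI allI)
    fix N0
    obtain g1 where g1: "g1 \<in> adsp" "\<forall>w. length w < N0 \<longrightarrow> X w = g1 w" using X unfolding cladsp_def by blast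
    show "\<exists>g\<in>adsp. \<forall>w. length w < N0 \<longrightarrow> psi N X w = g w"
    proof (intro bexI[OF _ psi_adsp[OF g1(1)]] allI impI)
      fix w :: "'a list" assume "length w < N0"
      then show "psi N X w = psi N g1 w" by (intro psi_local) (use g1 in auto)
    qed
  qed
qed

definition lag :: "nat \<Rightarrow> nat \<Rightarrow> 'k::field_char_0 poly" where
  "lag D N = (\<Prod>M\<in>{..D}-{N}. smult (1 / (of_nat N - of_nat M)) [:- of_nat M, 1:])"

lemma lag_deg: assumes "N \<le> D" shows "degree (lag D N :: 'k::field_char_0 poly) \<le> D"
proof -
  have "degree (lag D N :: 'k poly) \<le> (\<Sum>M\<in>{..D}-{N}. degree (smult (1 / (of_nat N - of_nat M)) [:- of_nat M, 1::'k:]))"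
    unfolding lag_def using degree_prod_sum_le[of "{..D}-{N}" "\<lambda>M. smult (1 / (of_nat N - of_nat M)) [:- of_nat M, 1::'k:]"] by (simp add: o_def)
  also have "\<dots> \<le> (\<Sum>M\<in>{..D}-{N}. 1)"
    by (intro sum_mono) (simp add: degree_smult_le)
  also have "\<dots> \<le> D" using \<open>N \<le> D\<close> by (simp add: card_Diff_singleton)
  finally show ?thesis .
qed

lemma poly_lin: "poly (smult c [:- a, 1:]) x = c * (x - a :: 'k::field)"
  by (simp add: algebra_simps)

lemma lag_eval: assumes "N \<le> D" "M \<le> D" shows "poly (lag D N :: 'k::field_char_0 poly) (of_nat M) = (if M = N then 1 else 0)"
proof (cases "M = N")
  case True
  have "poly (lag D N :: 'k poly) (of_nat M) = 1" unfolding lag_def poly_prod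
  proof (intro prod.neutral ballI)
    fix M' assume "M' \<in> {..D} - {N}"
    then have "(of_nat N :: 'k) - of_nat M' \<noteq> 0" by auto
    then show "poly (smult (1 / (of_nat N - of_nat M')) [:- of_nat M', 1:]) (of_nat M) = (1::'k)"
    proof -
      have "poly (smult (1 / (of_nat N - of_nat M')) [:- of_nat M', 1:]) (of_nat M) = (1 / (of_nat N - of_nat M')) * (of_nat N - (of_nat M' :: 'k))"
        using True by (simp only: poly_lin)
      also have "\<dots> = 1" using \<open>(of_nat N :: 'k) - of_nat M' \<noteq> 0\<close> by simp
      finally show ?thesis .
    qed
  qed
  then show ?thesis using True by simp
next
  case False
  have "poly (lag D N :: 'k poly) (of_nat M) = 0" unfolding lag_def poly_prod
  proof (rule prod_zero)
    show "\<exists>a\<in>{..D} - {N}. poly (smult (1 / (of_nat N - of_nat a)) [:- of_nat a, 1:]) (of_nat M) = (0::'k)"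
      using assms False by (intro bexI[where x=M]) (simp_all add: poly_lin)
  qed simp
  then show ?thesis using False by simp
qed

lemma vandermonde_dual:
  assumes "m \<le> D"
  shows "\<exists>lam :: nat \<Rightarrow> 'k::field_char_0. \<forall>k\<le>D. (\<Sum>N\<le>D. lam N * of_nat N ^ k) = (if k = m then 1 else 0)"
proof (intro exI allI impI)
  fix k assume k: "k \<le> D"
  define Q :: "'k poly" where "Q = (\<Sum>N\<le>D. smult (of_nat N ^ k) (lag D N))"
  have "Q = monom 1 k"
  proof (rule poly_eqI_degree[where A = "of_nat ` {..D}"])
    fix x :: 'k assume "x \<in> of_nat ` {..D}"
    then obtain M where M: "M \<le> D" "x = of_nat M" by auto
    have "poly Q x = (\<Sum>N\<le>D. of_nat N ^ k * (if M = N then 1 else 0))"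
      unfolding Q_def poly_sum using M by (intro sum.cong) (auto simp: lag_eval)
    also have "\<dots> = of_nat M ^ k" using M by (simp add: if_distrib cong: if_cong)
    finally show "poly Q x = poly (monom 1 k) x" using M by (simp add: poly_monom)
  next
    have c: "card (of_nat ` {..D} :: 'k set) = Suc D"
      by (subst card_image) (auto simp: inj_on_def)
    have "degree Q \<le> D" unfolding Q_def
    proof (intro degree_sum_le)
      fix p assume "p \<in> {..D}"
      then show "degree (smult (of_nat p ^ k) (lag D p :: 'k poly)) \<le> D"
      proof -
        have "degree (lag D p :: 'k poly) \<le> D" using \<open>p \<in> {..D}\<close> by (intro lag_deg) simp
        then show ?thesis using degree_smult_le[of "of_nat p ^ k" "lag D p :: 'k poly"] by linarith
      qed
    qed simp
    then show "degree Q < card (of_nat ` {..D} :: 'k set)" using c by simp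
    show "degree (monom (1::'k) k) < card (of_nat ` {..D} :: 'k set)" using c k by (simp add: degree_monom_eq)
  qed
  then have "coeff Q m = (if k = m then 1 else 0)" by (simp add: coeff_monom)
  then show "(\<Sum>N\<le>D. coeff (lag D N) m * of_nat N ^ k) = (if k = m then 1 else (0::'k))"
    unfolding Q_def coeff_sum by (simp add: mult.commute)
qed

theorem theorem3p3:
  fixes u :: "('a::finite, 'k::field_char_0) tser"
    and v :: "nat \<Rightarrow> ('a, 'k) tser"
    and n :: nat
  assumes "u \<in> free_lie"
    and "\<forall>j\<le>n. v j \<in> free_lie"
    and "trace_in (texp u)
           {(\<lambda>w. \<Sum>j\<le>n. s j w) | s. \<forall>j\<le>n. s j \<in> pseries_set (v j)}"
  shows "\<forall>m. trace_in (tpow u m)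
           {(\<lambda>w. \<Sum>j\<le>n. c j * tpow (v j) m w) | c. True}"
proof -
  have pu: "primitive u" using assms(1) by (simp add: free_lie_def)
  have pv: "primitive (v j)" if "j \<le> n" for j using assms(2) that by (simp add: free_lie_def)
  from assms(3) obtain s0 where s0: "s0 \<in> {(\<lambda>w. \<Sum>j\<le>n. s j w) | s. \<forall>j\<le>n. s j \<in> pseries_set (v j)}"
    and X0: "(\<lambda>w. texp u w - s0 w) \<in> comm_closure"
    unfolding trace_in_def by blast
  then obtain s where s: "\<forall>j\<le>n. s j \<in> pseries_set (v j)" and s0e: "s0 = (\<lambda>w. \<Sum>j\<le>n. s j w)" by blast
  have "\<forall>j. \<exists>c. j \<le> n \<longrightarrow> s j = fseries c (v j)" using s unfolding pseries_set_def by blast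
  then obtain C where C: "\<And>j. j \<le> n \<Longrightarrow> s j = fseries (C j) (v j)" by metis
  define X where "X = (\<lambda>w. texp u w - s0 w)"
  define Y where "Y k = (\<lambda>w. (1 / of_nat (fact k)) * tpow u k w - (\<Sum>j\<le>n. C j k * tpow (v j) k w))" for k
  have Ysmall: "Y k w = 0" if "length w < k" for k w
  proof -
    have "tpow u k w = 0" using tpow_small[of u w k] prim_Nil[OF pu] that by simp
    moreover have "tpow (v j) k w = 0" if "j \<in> {..n}" for j
      using tpow_small[of "v j" w k] prim_Nil[OF pv[of j]] \<open>length w < k\<close> that by simp
    ultimately show ?thesis unfolding Y_def by simp
  qed
  have Xeq: "X x = (\<Sum>k\<le>length w. Y k x)" if "length x = length w" for x w
  proof -
    have "s0 x = (\<Sum>j\<le>n. \<Sum>k\<le>length w. C j k * tpow (v j) k x)"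
      unfolding s0e using C that by (simp add: fseries_def)
    also have "\<dots> = (\<Sum>k\<le>length w. \<Sum>j\<le>n. C j k * tpow (v j) k x)"
      by (rule sum.swap)
    finally have "s0 x = \<dots>" .
    then show ?thesis unfolding X_def Y_def texp_def fseries_def using that by (simp add: sum_subtractf)
  qed
  have psiY: "psi N (Y k) w = of_nat N ^ k * Y k w" for N k w
  proof -
    have "psi N (Y k) w = (1 / of_nat (fact k)) * psi N (tpow u k) w - (\<Sum>j\<le>n. C j k * psi N (tpow (v j) k) w)"
      unfolding Y_def psi_diff psi_scale psi_sum_scale[OF finite_atMost] ..
    also have "\<dots> = (1 / of_nat (fact k)) * (of_nat N ^ k * tpow u k w) - (\<Sum>j\<le>n. C j k * (of_nat N ^ k * tpow (v j) k w))"
      using psi_tpow[OF pu] psi_tpow[OF pv] by simp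
    also have "\<dots> = of_nat N ^ k * Y k w"
      unfolding Y_def by (simp add: algebra_simps sum_distrib_left)
    finally show ?thesis .
  qed
  have psiX: "psi N X w = (\<Sum>k\<le>length w. of_nat N ^ k * Y k w)" for N w
  proof -
    have "psi N X w = psi N (\<lambda>x. \<Sum>k\<le>length w. Y k x) w"
      by (rule psi_local) (simp add: Xeq)
    also have "\<dots> = (\<Sum>k\<le>length w. psi N (Y k) w)" by (rule psi_sum) simp
    finally show ?thesis by (simp add: psiY)
  qed
  have Xcl: "X \<in> cladsp" using X0 closure_cl unfolding X_def by blast
  have Ycl: "Y m \<in> cladsp" for m
    unfolding cladsp_def
  proof (intro CollectI allI)
    fix N0
    define D where "D = N0 + m"
    obtain lam :: "nat \<Rightarrow> 'k" where lam: "\<And>k. k \<le> D \<Longrightarrow> (\<Sum>N\<le>D. lam N * of_nat N ^ k) = (if k = m then 1 else 0)"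
      using vandermonde_dual[of m D] unfolding D_def by auto
    define Z where "Z = (\<lambda>w. \<Sum>N\<le>D. lam N * psi N X w)"
    have "Z \<in> cladsp" unfolding Z_def
      by (intro cl_sum cl_scale psi_cl Xcl) simp
    then obtain g where g: "g \<in> adsp" "\<forall>w. length w < N0 \<longrightarrow> Z w = g w"
      unfolding cladsp_def by blast
    show "\<exists>g\<in>adsp. \<forall>w. length w < N0 \<longrightarrow> Y m w = g w"
    proof (intro bexI[OF _ g(1)] allI impI)
      fix w :: "'a list" assume w: "length w < N0"
      have "Z w = (\<Sum>N\<le>D. \<Sum>k\<le>length w. lam N * of_nat N ^ k * Y k w)"
        unfolding Z_def psiX by (simp add: sum_distrib_left mult.assoc)
      also have "\<dots> = (\<Sum>k\<le>length w. (\<Sum>N\<le>D. lam N * of_nat N ^ k) * Y k w)"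
        by (subst sum.swap) (simp add: sum_distrib_right)
      also have "\<dots> = (\<Sum>k\<le>length w. (if k = m then Y k w else 0))"
      proof (intro sum.cong refl)
        fix k assume "k \<in> {..length w}"
        then have "k \<le> D" using w unfolding D_def by simp
        then show "(\<Sum>N\<le>D. lam N * of_nat N ^ k) * Y k w = (if k = m then Y k w else 0)"
          using lam[OF \<open>k \<le> D\<close>] by simp
      qed
      also have "\<dots> = Y m w"
        using Ysmall[of w m] by (auto simp: not_le)
      finally show "Y m w = g w" using g(2) w by simp
    qed
  qed
  show ?thesis
  proof
    fix m
    have fm: "of_nat (fact m) \<noteq> (0::'k)" by simp
    have "(\<lambda>w. of_nat (fact m) * Y m w) \<in> cladsp" by (rule cl_scale[OF Ycl])
    moreover have "(\<lambda>w. of_nat (fact m) * Y m w) = (\<lambda>w. tpow u m w - (\<Sum>j\<le>n. (of_nat (fact m) * C j m) * tpow (v j) m w))"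
      unfolding Y_def using fm by (simp add: fun_eq_iff algebra_simps sum_distrib_left)
    ultimately have "(\<lambda>w. tpow u m w - (\<Sum>j\<le>n. (of_nat (fact m) * C j m) * tpow (v j) m w)) \<in> cladsp"
      by simp
    then have "(\<lambda>w. tpow u m w - (\<Sum>j\<le>n. (of_nat (fact m) * C j m) * tpow (v j) m w)) \<in> comm_closure"
      unfolding closure_cl .
    then have cc: "(\<lambda>w. tpow u m w - (\<lambda>w. \<Sum>j\<le>n. (of_nat (fact m) * C j m) * tpow (v j) m w) w) \<in> comm_closure"
      by simp
    have mem: "(\<lambda>w. \<Sum>j\<le>n. (of_nat (fact m) * C j m) * tpow (v j) m w) \<in> {(\<lambda>w. \<Sum>j\<le>n. c j * tpow (v j) m w) | c. True}"
      by (rule CollectI, rule exI[where x="\<lambda>j. of_nat (fact m) * C j m"]) simp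
    show "trace_in (tpow u m) {(\<lambda>w. \<Sum>j\<le>n. c j * tpow (v j) m w) | c. True}"
      unfolding trace_in_def
    proof (rule bexI[OF _ mem])
      show "(\<lambda>w. tpow u m w - (\<lambda>w. \<Sum>j\<le>n. (of_nat (fact m) * C j m) * tpow (v j) m w) w) \<in> comm_closure"
        using cc by simp
    qed
  qed
qed

end
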